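(* Let $(X,d)$ be a compact metric space and $f:X\to X$ continuous. Suppose (1) there is $(z,w)\in CR(f)^2$ with $z\sim w$ and such that $(z,w)$ has property*; and (2) for every sequence $(x_i)_{i\ge0}$ of points of $CR(f)$ with $\lim_{i\to\infty}d(f(x_i),x_{i+1})=0$ there is $x\in X$ with $\lim_{n\to\infty}\frac1n\sum_{i=0}^{n-1}d(f^i(x),x_i)=0$. Then $f$ exhibits DC1.
   Context: A $\delta$-chain of $f$ is a finite sequence $(x_i)_{i=0}^k$, $k\ge1$, with $d(f(x_i),x_{i+1})\le\delta$ for $0\le i<k$; a $\delta$-cycle is a $\delta$-chain with $x_0=x_k$. $CR(f)$ is the set of points $x$ such that for every $\delta>0$ there is a $\delta$-cycle starting and ending at $x$. For $x,y\in CR(f)$, $x\sim y$ iff for every $\delta>0$ there are integers $m>0$, $N>0$ such that for every $n\ge N$ there are $\delta$-chains $(x_i)_{i=0}^{mn},(y_i)_{i=0}^{mn}$ in $CR(f)$ with $x_0=y_{mn}=x$, $x_{mn}=y_0=y$. A pair $(x,y)\in CR(f)^2$ has property* if there is $r>0$ such that for every $\delta>0$ there are $\delta$-cycles $(x_i)_{i=0}^k,(y_i)_{i=0}^k$ of $f$ in $CR(f)$ (same length $k$) with $x_0=x_k=x$, $y_0=y_k=y$ and $d(x_i,y_i)>r$ for all $0\le i\le k$. A pair $(x,y)$ is a DC1-pair if $\limsup_{n}\frac1n|\{0\le i<n: d(f^i(x),f^i(y))<\delta\}|=1$ for all $\delta>0$ and $\limsup_{n}\frac1n|\{0\le i<n: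 d(f^i(x),f^i(y))>\delta_0\}|=1$ for some $\delta_0>0$; $f$ exhibits DC1 if there is an uncountable $S\subset X$ any two distinct points of which form a DC1-pair. *)

theory Defs
  imports "HOL-Analysis.Analysis" "HOL-Library.Liminf_Limsup"
begin

definition delta_chain :: "('a::metric_space \<Rightarrow> 'a) \<Rightarrow> real \<Rightarrow> (nat \<Rightarrow> 'a) \<Rightarrow> nat \<Rightarrow> bool" where
  "delta_chain f \<delta> xs k \<longleftrightarrow> k \<ge> 1 \<and> (\<forall>i<k. dist (f (xs i)) (xs (Suc i)) \<le> \<delta>)"

definition chain_recurrent_set :: "('a::metric_space \<Rightarrow> 'a) \<Rightarrow> 'a set" where
  "chain_recurrent_set f = {x. \<forall>\<delta>>0. \<exists>xs k. delta_chain f \<delta> xs k \<and> xs 0 = x \<and> xs k = x}"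

definition CR_rel :: "('a::metric_space \<Rightarrow> 'a) \<Rightarrow> 'a \<Rightarrow> 'a \<Rightarrow> bool" where
  "CR_rel f x y \<longleftrightarrow> x \<in> chain_recurrent_set f \<and> y \<in> chain_recurrent_set f \<and>
     (\<forall>\<delta>>0. \<exists>m>0. \<exists>N>0. \<forall>n\<ge>N. \<exists>xs ys.
        delta_chain f \<delta> xs (m*n) \<and> delta_chain f \<delta> ys (m*n) \<and>
        (\<forall>i\<le>m*n. xs i \<in> chain_recurrent_set f \<and> ys i \<in> chain_recurrent_set f) \<and>
        xs 0 = x \<and> xs (m*n) = y \<and> ys 0 = y \<and> ys (m*n) = x)"

definition property_star :: "('a::metric_space \<Rightarrow> 'a) \<Rightarrow> 'a \<Rightarrow> 'a \<Rightarrow> bool" where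
  "property_star f x y \<longleftrightarrow> x \<in> chain_recurrent_set f \<and> y \<in> chain_recurrent_set f \<and>
     (\<exists>r>0. \<forall>\<delta>>0. \<exists>k xs ys.
        delta_chain f \<delta> xs k \<and> delta_chain f \<delta> ys k \<and>
        (\<forall>i\<le>k. xs i \<in> chain_recurrent_set f \<and> ys i \<in> chain_recurrent_set f) \<and>
        xs 0 = x \<and> xs k = x \<and> ys 0 = y \<and> ys k = y \<and>
        (\<forall>i\<le>k. dist (xs i) (ys i) > r))"

definition DC1_pair :: "('a::metric_space \<Rightarrow> 'a) \<Rightarrow> 'a \<Rightarrow> 'a \<Rightarrow> bool" where
  "DC1_pair f x y \<longleftrightarrow>
     (\<forall>\<delta>>0. limsup (\<lambda>n. ereal (real (card {i. i < n \<and> dist ((f^^i) x) ((f^^i) y) < \<delta>}) / real n)) = 1) \<and>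
     (\<exists>\<delta>0>0. limsup (\<lambda>n. ereal (real (card {i. i < n \<and> dist ((f^^i) x) ((f^^i) y) > \<delta>0}) / real n)) = 1)"

definition exhibits_DC1 :: "('a::metric_space \<Rightarrow> 'a) \<Rightarrow> bool" where
  "exhibits_DC1 f \<longleftrightarrow> (\<exists>S. uncountable S \<and> (\<forall>x\<in>S. \<forall>y\<in>S. x \<noteq> y \<longrightarrow> DC1_pair f x y))"

end

theory Submission
  imports Defs
begin


lemma uncountable_bitseq: "uncountable (UNIV :: (nat \<Rightarrow> bool) set)"
proof
  assume "countable (UNIV :: (nat \<Rightarrow> bool) set)"
  then obtain g :: "nat \<Rightarrow> (nat \<Rightarrow> bool)" where g: "range g = UNIV"
    using uncountable_def by blast
  then obtain n where "g n = (\<lambda>i. \<not> g i i)" by (metis UNIV_I rangeE)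
  then show False by (metis)
qed

lemma limsup_eq_one:
  fixes u :: "nat \<Rightarrow> real"
  assumes le: "\<And>n. u n \<le> 1"
    and fr: "\<And>\<epsilon> N. \<epsilon> > 0 \<Longrightarrow> \<exists>n\<ge>N. u n \<ge> 1 - \<epsilon>"
  shows "limsup (\<lambda>n. ereal (u n)) = 1"
proof (rule antisym)
  show "limsup (\<lambda>n. ereal (u n)) \<le> 1"
    by (rule Limsup_bounded) (use le in auto)
  show "1 \<le> limsup (\<lambda>n. ereal (u n))"
  proof (rule ccontr)
    assume "\<not> 1 \<le> limsup (\<lambda>n. ereal (u n))"
    then have L: "limsup (\<lambda>n. ereal (u n)) < 1" by simp
    then obtain y where y: "limsup (\<lambda>n. ereal (u n)) < y" "y < 1" using dense by blast
    have ev: "eventually (\<lambda>n. ereal (u n) < y) sequentially" using y(1) by (rule Limsup_lessD)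
    have yfin: "y \<noteq> \<infinity>" "y \<noteq> -\<infinity>" using y by auto
    then obtain yr where yr: "y = ereal yr" by (cases y) auto
    with y have "yr < 1" by simp
    from ev obtain N where N: "\<And>n. n \<ge> N \<Longrightarrow> u n < yr"
      unfolding eventually_sequentially yr by auto
    from fr[of "1 - yr" N] \<open>yr < 1\<close> obtain n where "n \<ge> N" "u n \<ge> yr" by auto
    with N show False by force
  qed
qed

lemma markov_density:
  fixes e :: "nat \<Rightarrow> real"
  assumes nn: "\<And>i. e i \<ge> 0"
    and lim: "(\<lambda>n. (\<Sum>i<n. e i) / real n) \<longlonglongrightarrow> 0"
    and eta: "\<eta> > 0"
  shows "(\<lambda>n. real (card {i. i < n \<and> e i \<ge> \<eta>}) / real n) \<longlonglongrightarrow> 0"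
proof (rule tendsto_sandwich[where f="\<lambda>n. 0" and h="\<lambda>n. ((\<Sum>i<n. e i) / real n) / \<eta>"])
  show "\<forall>\<^sub>F n in sequentially. 0 \<le> real (card {i. i < n \<and> e i \<ge> \<eta>}) / real n" by auto
  show "\<forall>\<^sub>F n in sequentially. real (card {i. i < n \<and> e i \<ge> \<eta>}) / real n \<le> ((\<Sum>i<n. e i) / real n) / \<eta>"
  proof (rule always_eventually, rule allI)
    fix n
    let ?S = "{i. i < n \<and> e i \<ge> \<eta>}"
    have fin: "finite ?S" by auto
    have "real (card ?S) * \<eta> = (\<Sum>i\<in>?S. \<eta>)" by simp
    also have "\<dots> \<le> (\<Sum>i\<in>?S. e i)" by (rule sum_mono) auto
    also have "\<dots> \<le> (\<Sum>i<n. e i)" by (rule sum_mono2) (use nn in auto)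
    finally have *: "real (card ?S) * \<eta> \<le> (\<Sum>i<n. e i)" .
    show "real (card ?S) / real n \<le> ((\<Sum>i<n. e i) / real n) / \<eta>"
    proof (cases "n = 0")
      case True then show ?thesis by simp
    next
      case False
      then show ?thesis using * eta by (simp add: field_simps)
    qed
  qed
  show "(\<lambda>n. 0) \<longlonglongrightarrow> (0::real)" by simp
  show "(\<lambda>n. ((\<Sum>i<n. e i) / real n) / \<eta>) \<longlonglongrightarrow> 0"
    using tendsto_divide[OF lim tendsto_const[of \<eta>]] eta by simp
qed



locale constr =
  fixes f :: "'a::metric_space \<Rightarrow> 'a" and z w :: 'a and r :: real
    and k :: "nat \<Rightarrow> nat" and X Y :: "nat \<Rightarrow> nat \<Rightarrow> 'a" and M :: "nat \<Rightarrow> nat"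
    and Zw Wz :: "nat \<Rightarrow> nat \<Rightarrow> 'a"
  assumes r_pos: "r > 0"
    and k_pos: "\<And>j. k j \<ge> 1"
    and X_step: "\<And>j i. i < k j \<Longrightarrow> dist (f (X j i)) (X j (Suc i)) \<le> inverse (real (Suc j))"
    and X0: "\<And>j. X j 0 = z" and Xk: "\<And>j. X j (k j) = z"
    and XCR: "\<And>j i. i \<le> k j \<Longrightarrow> X j i \<in> chain_recurrent_set f"
    and Y_step: "\<And>j i. i < k j \<Longrightarrow> dist (f (Y j i)) (Y j (Suc i)) \<le> inverse (real (Suc j))"
    and Y0: "\<And>j. Y j 0 = w" and Yk: "\<And>j. Y j (k j) = w"
    and YCR: "\<And>j i. i \<le> k j \<Longrightarrow> Y j i \<in> chain_recurrent_set f"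
    and XY: "\<And>j i. i \<le> k j \<Longrightarrow> dist (X j i) (Y j i) > r"
    and M_pos: "\<And>j. M j \<ge> 1" and M_dvd: "\<And>j. k j dvd M j"
    and Zw_step: "\<And>j i. i < M j \<Longrightarrow> dist (f (Zw j i)) (Zw j (Suc i)) \<le> inverse (real (Suc j))"
    and Zw0: "\<And>j. Zw j 0 = z" and ZwM: "\<And>j. Zw j (M j) = w"
    and ZwCR: "\<And>j i. i \<le> M j \<Longrightarrow> Zw j i \<in> chain_recurrent_set f"
    and Wz_step: "\<And>j i. i < M j \<Longrightarrow> dist (f (Wz j i)) (Wz j (Suc i)) \<le> inverse (real (Suc j))"
    and Wz0: "\<And>j. Wz j 0 = w" and WzM: "\<And>j. Wz j (M j) = z"
    and WzCR: "\<And>j i. i \<le> M j \<Longrightarrow> Wz j i \<in> chain_recurrent_set f"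
begin

primrec P :: "nat \<Rightarrow> nat" where
  "P 0 = 0"
| "P (Suc j) = P j + (2*M j + Suc j*(P j + M j)*k j + Suc j*(P j + 2*M j + Suc j*(P j + M j)*k j)*k j)"

definition DD :: "nat \<Rightarrow> nat" where "DD j = Suc j*(P j + M j)*k j"
definition AA :: "nat \<Rightarrow> nat" where "AA j = Suc j*(P j + 2*M j + DD j)*k j"
definition BB :: "nat \<Rightarrow> nat" where "BB j = 2*M j + DD j + AA j"

lemma P_Suc': "P (Suc j) = P j + BB j"
  by (simp add: BB_def AA_def DD_def)

declare P.simps(2)[simp del]

lemma DD_ge: "(P j + M j) * Suc j \<le> DD j"
proof -
  have "(P j + M j) * Suc j * 1 \<le> (P j + M j) * Suc j * k j"
    using k_pos[of j] by (intro mult_le_mono2) auto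
  then show ?thesis by (simp add: DD_def mult.commute mult.left_commute)
qed

lemma AA_ge: "(P j + 2*M j + DD j) * Suc j \<le> AA j"
proof -
  have "(P j + 2*M j + DD j) * Suc j * 1 \<le> (P j + 2*M j + DD j) * Suc j * k j"
    using k_pos[of j] by (intro mult_le_mono2) auto
  then show ?thesis by (simp add: AA_def mult.commute mult.left_commute)
qed

lemma DD_pos: "DD j > 0"
  using M_pos[of j] k_pos[of j] by (simp add: DD_def)

lemma dvd_DD: "k j dvd DD j" by (simp add: DD_def)
lemma dvd_AA: "k j dvd AA j" by (simp add: AA_def)
lemma dvd_BB: "k j dvd BB j" using M_dvd[of j] dvd_DD[of j] dvd_AA[of j] by (simp add: BB_def)

lemma P_less: "P j < P (Suc j)"
  using M_pos[of j] by (simp add: P_Suc' BB_def)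

lemma P_mono: "strict_mono P"
  by (rule strict_monoI_Suc) (rule P_less)

lemma P_ge: "j \<le> P j"
  using P_mono by (simp add: strict_mono_imp_increasing)

definition blk :: "nat \<Rightarrow> nat" where "blk i = (LEAST j. i < P (Suc j))"

lemma blk_spec: "P (blk i) \<le> i \<and> i < P (Suc (blk i))"
proof -
  have ex: "i < P (Suc i)" using P_ge[of "Suc i"] by simp
  have 1: "i < P (Suc (blk i))" unfolding blk_def by (rule LeastI[of _ i]) (rule ex)
  have 2: "P (blk i) \<le> i"
  proof (cases "blk i")
    case 0 then show ?thesis by simp
  next
    case (Suc j)
    have "\<not> i < P (Suc j)"
    proof
      assume "i < P (Suc j)"
      then have "blk i \<le> j" unfolding blk_def by (rule Least_le)
      with Suc show False by simp
    qed
    with Suc show ?thesis by simp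
  qed
  from 1 2 show ?thesis by simp
qed

lemma blk_eq: assumes "P j \<le> i" "i < P (Suc j)" shows "blk i = j"
proof -
  have a: "P (blk i) \<le> i" "i < P (Suc (blk i))" using blk_spec[of i] by auto
  have "\<not> blk i < j"
  proof
    assume "blk i < j" then have "Suc (blk i) \<le> j" by simp
    then have "P (Suc (blk i)) \<le> P j" using P_mono by (simp add: strict_mono_less_eq)
    with a assms show False by simp
  qed
  moreover have "\<not> j < blk i"
  proof
    assume "j < blk i" then have "Suc j \<le> blk i" by simp
    then have "P (Suc j) \<le> P (blk i)" using P_mono by (simp add: strict_mono_less_eq)
    with a assms show False by simp
  qed
  ultimately show ?thesis by simp
qed

lemma blk_ge: assumes "P J \<le> i" shows "J \<le> blk i"
proof (rule ccontr)
  assume "\<not> J \<le> blk i" then have "Suc (blk i) \<le> J" by simp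
  then have "P (Suc (blk i)) \<le> P J" using P_mono by (simp add: strict_mono_less_eq)
  with blk_spec[of i] assms show False by simp
qed

definition blockseq :: "nat \<Rightarrow> bool \<Rightarrow> nat \<Rightarrow> 'a" where
  "blockseq j b t = (if b then (if t < M j then Zw j t else if t < M j + DD j then Y j (t mod k j)
      else if t < 2*M j + DD j then Wz j (t - (M j + DD j)) else X j (t mod k j))
     else X j (t mod k j))"

lemma X_per: "dist (f (X j (t mod k j))) (X j (Suc t mod k j)) \<le> inverse (real (Suc j))"
proof -
  have lt: "t mod k j < k j" using k_pos[of j] by simp
  have "X j (Suc t mod k j) = X j (Suc (t mod k j))"
    using lt by (auto simp: mod_Suc X0 Xk)
  then show ?thesis using X_step[OF lt] by simp
qed

lemma Y_per: "dist (f (Y j (t mod k j))) (Y j (Suc t mod k j)) \<le> inverse (real (Suc j))"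
proof -
  have lt: "t mod k j < k j" using k_pos[of j] by simp
  have "Y j (Suc t mod k j) = Y j (Suc (t mod k j))"
    using lt by (auto simp: mod_Suc Y0 Yk)
  then show ?thesis using Y_step[OF lt] by simp
qed

lemma block_step:
  assumes "t < BB j"
  shows "dist (f (blockseq j b t)) (blockseq j b (Suc t)) \<le> inverse (real (Suc j))"
proof (cases b)
  case False then show ?thesis using X_per by (simp add: blockseq_def)
next
  case True
  have Dp: "DD j > 0" by (rule DD_pos)
  have kM: "M j mod k j = 0" using M_dvd[of j] by simp
  have kD: "DD j mod k j = 0" using dvd_DD[of j] by simp
  consider "Suc t < M j" | "Suc t = M j" | "M j \<le> t" "Suc t < M j + DD j" | "Suc t = M j + DD j"
    | "M j + DD j \<le> t" "Suc t < 2*M j + DD j" | "Suc t = 2*M j + DD j" | "2*M j + DD j \<le> t"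
    by linarith
  then show ?thesis
  proof cases
    case 1 then show ?thesis using True Zw_step[of t j] by (simp add: blockseq_def)
  next
    case 2
    have "Y j (Suc t mod k j) = w" using 2 kM by (simp add: Y0)
    then show ?thesis using True 2 Zw_step[of t j] Dp by (simp add: blockseq_def ZwM)
  next
    case 3 then show ?thesis using True Y_per[of j t] by (simp add: blockseq_def)
  next
    case 4
    have m: "Suc t mod k j = 0" using 4 kM kD by (simp add: mod_add_eq[symmetric])
    have "Y j (Suc t mod k j) = w" using m by (simp add: Y0)
    then show ?thesis using True 4 Y_per[of j t] M_pos[of j] Dp by (simp add: blockseq_def Wz0)
  next
    case 5
    have "Suc (t - (M j + DD j)) = Suc t - (M j + DD j)" using 5 by simp
    then show ?thesis using True 5 Wz_step[of "t - (M j + DD j)" j] by (simp add: blockseq_def)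
  next
    case 6
    have m: "Suc t mod k j = 0" using 6 kM kD by (simp add: mod_add_eq[symmetric] mult_2)
    have e: "Suc (t - (M j + DD j)) = M j" using 6 M_pos[of j] by simp
    have "X j (Suc t mod k j) = Wz j (M j)" using m by (simp add: X0 WzM)
    then show ?thesis using True 6 e Wz_step[of "t - (M j + DD j)" j] M_pos[of j]
      by (simp add: blockseq_def)
  next
    case 7 then show ?thesis using True X_per[of j t] by (simp add: blockseq_def)
  qed
qed

lemma block_0: "blockseq j b 0 = z"
  using M_pos[of j] by (simp add: blockseq_def X0 Zw0)

lemma block_end: "blockseq j b (BB j) = z"
proof -
  have "BB j mod k j = 0" using dvd_BB[of j] by simp
  then show ?thesis by (simp add: blockseq_def BB_def X0)
qed

lemma block_CR: "blockseq j b t \<in> chain_recurrent_set f"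
proof -
  have lt: "t mod k j \<le> k j" using k_pos[of j] by (simp add: order_less_imp_le)
  show ?thesis using XCR[OF lt] YCR[OF lt] ZwCR[of t j] WzCR[of "t - (M j + DD j)" j]
    by (simp add: blockseq_def)
qed

definition bit :: "(nat \<Rightarrow> bool) \<Rightarrow> nat \<Rightarrow> bool" where "bit s j = s (fst (prod_decode j))"

definition orb :: "(nat \<Rightarrow> bool) \<Rightarrow> nat \<Rightarrow> 'a" where
  "orb s i = blockseq (blk i) (bit s (blk i)) (i - P (blk i))"

lemma orb_at: assumes "t < BB j" shows "orb s (P j + t) = blockseq j (bit s j) t"
proof -
  have "blk (P j + t) = j" using assms by (intro blk_eq) (auto simp: P_Suc')
  then show ?thesis by (simp add: orb_def)
qed

lemma orb_CR: "orb s i \<in> chain_recurrent_set f"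
  by (simp add: orb_def block_CR)

lemma orb_step: "dist (f (orb s i)) (orb s (Suc i)) \<le> inverse (real (Suc (blk i)))"
proof -
  define j where "j = blk i"
  define t where "t = i - P j"
  have sp: "P j \<le> i" "i < P (Suc j)" using blk_spec[of i] by (auto simp: j_def)
  have tl: "t < BB j" and it: "i = P j + t" using sp by (auto simp: t_def P_Suc')
  have o1: "orb s i = blockseq j (bit s j) t" using orb_at[OF tl] it by simp
  have o2: "orb s (Suc i) = blockseq j (bit s j) (Suc t)"
  proof (cases "Suc t < BB j")
    case True then show ?thesis using orb_at[OF True] it by simp
  next
    case False
    then have e: "Suc t = BB j" using tl by simp
    then have "Suc i = P (Suc j) + 0" using it by (simp add: P_Suc')
    then have "orb s (Suc i) = blockseq (Suc j) (bit s (Suc j)) 0"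
      using orb_at[of 0 "Suc j" s] M_pos[of "Suc j"] by (simp add: BB_def)
    then show ?thesis using e by (simp add: block_0 block_end)
  qed
  show ?thesis using block_step[OF tl, of "bit s j"] o1 o2 by (simp add: j_def)
qed

lemma orb_step_lim: "(\<lambda>i. dist (f (orb s i)) (orb s (Suc i))) \<longlonglongrightarrow> 0"
proof (rule tendsto_sandwich[where f="\<lambda>i. 0" and h="\<lambda>i. inverse (real (Suc (blk i)))"])
  show "\<forall>\<^sub>F n in sequentially. 0 \<le> dist (f (orb s n)) (orb s (Suc n))" by simp
  show "\<forall>\<^sub>F n in sequentially. dist (f (orb s n)) (orb s (Suc n)) \<le> inverse (real (Suc (blk n)))"
    using orb_step by simp
  show "(\<lambda>i. 0) \<longlonglongrightarrow> (0::real)" by simp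
  have "filterlim blk at_top sequentially"
    unfolding filterlim_at_top eventually_sequentially
    by (metis blk_ge)
  then have "filterlim (\<lambda>i. real (Suc (blk i))) at_top sequentially"
    by (metis filterlim_compose filterlim_real_sequentially filterlim_Suc filterlim_compose[of Suc])
  then show "(\<lambda>i. inverse (real (Suc (blk i)))) \<longlonglongrightarrow> 0"
    by (rule tendsto_inverse_0_at_top)
qed

lemma orb_agree:
  assumes "P j + 2*M j + DD j \<le> i" "i < P (Suc j)"
  shows "orb s i = orb s' i"
proof -
  have b: "blk i = j" using assms by (intro blk_eq) auto
  have "2*M j + DD j \<le> i - P j" using assms by simp
  then show ?thesis by (simp add: orb_def b blockseq_def)
qed

lemma orb_differ:
  assumes "P j + M j \<le> i" "i < P j + M j + DD j" "bit s j \<noteq> bit s' j"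
  shows "dist (orb s i) (orb s' i) > r"
proof -
  have b: "blk i = j" using assms by (intro blk_eq) (auto simp: P_Suc' BB_def)
  have lt: "(i - P j) mod k j \<le> k j" using k_pos[of j] by (simp add: order_less_imp_le)
  have "i - P j < M j + DD j" "M j \<le> i - P j" using assms by auto
  then show ?thesis using assms(3) XY[OF lt] by (cases "bit s j") (auto simp: orb_def b blockseq_def dist_commute)
qed

end


lemma cover_card:
  fixes G B1 B2 B3 :: "nat set"
  assumes "{..<n} \<subseteq> G \<union> B1 \<union> B2 \<union> B3" "finite G" "finite B1" "finite B2" "finite B3"
  shows "real n \<le> real (card G) + real (card B1) + real (card B2) + real (card B3)"
proof -
  have "n = card {..<n}" by simp
  also have "\<dots> \<le> card (G \<union> B1 \<union> B2 \<union> B3)" using assms by (intro card_mono) auto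
  also have "\<dots> \<le> card G + card B1 + card B2 + card B3"
    by (meson add_le_mono card_Un_le le_refl order_trans)
  finally show ?thesis by linarith
qed

lemma frac_le1: "real (card {i. i < n \<and> Q i}) / real n \<le> 1"
proof (cases "n = 0")
  case False
  have "card {i. i < n \<and> Q i} \<le> card {..<n}" by (intro card_mono) auto
  then show ?thesis using False by simp
qed simp

lemma ev_small:
  fixes g :: "nat \<Rightarrow> real"
  assumes "g \<longlonglongrightarrow> 0" "c > 0"
  obtains N where "\<And>n. n \<ge> N \<Longrightarrow> g n < c"
proof -
  have "eventually (\<lambda>n. g n < c) sequentially"
    using order_tendstoD(2)[OF assms] .
  then show ?thesis using that unfolding eventually_sequentially by auto
qed

lemma half_pos: "(d::real) > 0 \<Longrightarrow> d/2 > 0" by simp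
lemma quarter_pos: "(d::real) > 0 \<Longrightarrow> d/4 > 0" by simp
lemma third_pos: "(d::real) > 0 \<Longrightarrow> d/3 > 0" by simp

context constr
begin

lemma DC1_pairs:
  fixes x :: "(nat \<Rightarrow> bool) \<Rightarrow> 'a"
  assumes sh: "\<And>s. (\<lambda>n. (\<Sum>i<n. dist ((f^^i) (x s)) (orb s i)) / real n) \<longlonglongrightarrow> 0"
    and ne: "s \<noteq> s'"
  shows "DC1_pair f (x s) (x s') \<and> x s \<noteq> x s'"
proof -
  define e where "e i = dist ((f^^i) (x s)) (orb s i)" for i
  define e' where "e' i = dist ((f^^i) (x s')) (orb s' i)" for i
  have me: "\<And>\<eta>. \<eta> > 0 \<Longrightarrow> (\<lambda>n. real (card {i. i < n \<and> e i \<ge> \<eta>}) / real n) \<longlonglongrightarrow> 0"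
    using markov_density[of e] sh[of s] unfolding e_def by auto
  have me': "\<And>\<eta>. \<eta> > 0 \<Longrightarrow> (\<lambda>n. real (card {i. i < n \<and> e' i \<ge> \<eta>}) / real n) \<longlonglongrightarrow> 0"
    using markov_density[of e'] sh[of s'] unfolding e'_def by auto
  have tri4: "dist a d \<le> dist a b + dist b c + dist c d" for a b c d :: 'a
    using dist_triangle[of a d c] dist_triangle[of a c b] by linarith
  have tri: "dist (orb s i) (orb s' i) \<le> e i + dist ((f^^i) (x s)) ((f^^i) (x s')) + e' i" for i
    unfolding e_def e'_def using tri4[of "orb s i" "orb s' i" "(f^^i) (x s)" "(f^^i) (x s')"]
      dist_commute[of "orb s i" "(f^^i) (x s)"] by linarith
  have tri2: "dist ((f^^i) (x s)) ((f^^i) (x s')) \<le> e i + dist (orb s i) (orb s' i) + e' i" for i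
    unfolding e_def e'_def using tri4[of "(f^^i) (x s)" "(f^^i) (x s')" "orb s i" "orb s' i"]
      dist_commute[of "orb s' i" "(f^^i) (x s')"] by linarith
  have A: "limsup (\<lambda>n. ereal (real (card {i. i < n \<and> dist ((f^^i) (x s)) ((f^^i) (x s')) < \<delta>}) / real n)) = 1"
    if dp: "\<delta> > 0" for \<delta>
  proof (rule limsup_eq_one[OF frac_le1])
    fix \<epsilon> :: real and N :: nat assume ep: "\<epsilon> > 0"
    obtain N1 where N1: "\<And>n. n \<ge> N1 \<Longrightarrow> real (card {i. i < n \<and> e i \<ge> \<delta>/2}) / real n < \<epsilon>/3"
      using ev_small[OF me[OF half_pos[OF dp]] third_pos[OF ep]] by blast
    obtain N2 where N2: "\<And>n. n \<ge> N2 \<Longrightarrow> real (card {i. i < n \<and> e' i \<ge> \<delta>/2}) / real n < \<epsilon>/3"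
      using ev_small[OF me'[OF half_pos[OF dp]] third_pos[OF ep]] by blast
    obtain j0 where j0: "inverse (real (Suc j0)) < \<epsilon>/3"
      using reals_Archimedean[of "\<epsilon>/3"] ep by auto
    define j where "j = max j0 (max N (max N1 N2))"
    define n where "n = P (Suc j)"
    have nge: "n \<ge> Suc j" using P_ge[of "Suc j"] by (simp add: n_def)
    then have "n \<ge> N" "n \<ge> N1" "n \<ge> N2" "n > 0" by (auto simp: j_def)
    define G where "G = {i. i < n \<and> dist ((f^^i) (x s)) ((f^^i) (x s')) < \<delta>}"
    define B1 where "B1 = {i. i < n \<and> e i \<ge> \<delta>/2}"
    define B2 where "B2 = {i. i < n \<and> e' i \<ge> \<delta>/2}"
    define B3 where "B3 = {i. i < n \<and> orb s i \<noteq> orb s' i}"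
    have cov: "{..<n} \<subseteq> G \<union> B1 \<union> B2 \<union> B3"
    proof
      fix i assume i: "i \<in> {..<n}"
      show "i \<in> G \<union> B1 \<union> B2 \<union> B3"
      proof (cases "e i < \<delta>/2 \<and> e' i < \<delta>/2 \<and> orb s i = orb s' i")
        case True
        then have "dist ((f^^i) (x s)) ((f^^i) (x s')) < \<delta>" using tri2[of i] by simp
        then show ?thesis using i by (simp add: G_def)
      next
        case False then show ?thesis using i by (auto simp: B1_def B2_def B3_def)
      qed
    qed
    have c: "real n \<le> real (card G) + real (card B1) + real (card B2) + real (card B3)"
      by (rule cover_card[OF cov]) (auto simp: G_def B1_def B2_def B3_def)
    have "B3 \<subseteq> {..< P j + 2*M j + DD j}"
      using orb_agree[of j _ s s'] by (auto simp: B3_def n_def not_le[symmetric])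
    then have "card B3 \<le> P j + 2*M j + DD j"
      by (metis card_lessThan card_mono finite_lessThan)
    then have "card B3 * Suc j \<le> (P j + 2*M j + DD j) * Suc j" by (rule mult_le_mono1)
    also have "\<dots> \<le> AA j" by (rule AA_ge)
    also have "\<dots> \<le> n" by (simp add: n_def P_Suc' BB_def)
    finally have "card B3 * Suc j \<le> n" .
    then have "real (card B3) * real (Suc j) \<le> real n" by (metis of_nat_le_iff of_nat_mult)
    then have b3: "real (card B3) / real n \<le> inverse (real (Suc j))"
      using \<open>n > 0\<close> by (simp add: field_simps)
    have "inverse (real (Suc j)) \<le> inverse (real (Suc j0))"
      by (simp add: j_def)
    with b3 j0 have b3': "real (card B3) / real n < \<epsilon>/3" by linarith
    have b1: "real (card B1) / real n < \<epsilon>/3" using N1 \<open>n \<ge> N1\<close> by (simp add: B1_def)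
    have b2: "real (card B2) / real n < \<epsilon>/3" using N2 \<open>n \<ge> N2\<close> by (simp add: B2_def)
    have "1 \<le> real (card G) / real n + real (card B1) / real n + real (card B2) / real n + real (card B3) / real n"
      using c \<open>n > 0\<close> by (simp add: field_simps)
    then have "real (card G) / real n \<ge> 1 - \<epsilon>" using b1 b2 b3' by linarith
    then show "\<exists>n\<ge>N. 1 - \<epsilon> \<le> real (card {i. i < n \<and> dist ((f^^i) (x s)) ((f^^i) (x s')) < \<delta>}) / real n"
      using \<open>n \<ge> N\<close> unfolding G_def by blast
  qed
  obtain k0 where k0: "s k0 \<noteq> s' k0" using ne by blast
  have Bfr: "\<exists>n\<ge>N. 1 - \<epsilon> \<le> real (card {i. i < n \<and> dist ((f^^i) (x s)) ((f^^i) (x s')) > r/2}) / real n"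
    if ep: "\<epsilon> > 0" for \<epsilon> N
  proof -
    obtain N1 where N1: "\<And>n. n \<ge> N1 \<Longrightarrow> real (card {i. i < n \<and> e i \<ge> r/4}) / real n < \<epsilon>/3"
      using ev_small[OF me[OF quarter_pos[OF r_pos]] third_pos[OF ep]] by blast
    obtain N2 where N2: "\<And>n. n \<ge> N2 \<Longrightarrow> real (card {i. i < n \<and> e' i \<ge> r/4}) / real n < \<epsilon>/3"
      using ev_small[OF me'[OF quarter_pos[OF r_pos]] third_pos[OF ep]] by blast
    obtain j0 where j0: "inverse (real (Suc j0)) < \<epsilon>/3"
      using reals_Archimedean[of "\<epsilon>/3"] ep by auto
    define j where "j = prod_encode (k0, max j0 (max N (max N1 N2)))"
    have jge: "j \<ge> max j0 (max N (max N1 N2))" unfolding j_def by (rule le_prod_encode_2)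
    have bj: "bit s j \<noteq> bit s' j" using k0 by (simp add: bit_def j_def)
    define n where "n = P j + M j + DD j"
    have nge: "n \<ge> j" using P_ge[of j] by (simp add: n_def)
    then have "n \<ge> N" "n \<ge> N1" "n \<ge> N2" using jge by auto
    have "n > 0" using DD_pos[of j] by (simp add: n_def)
    define G where "G = {i. i < n \<and> dist ((f^^i) (x s)) ((f^^i) (x s')) > r/2}"
    define B1 where "B1 = {i. i < n \<and> e i \<ge> r/4}"
    define B2 where "B2 = {i. i < n \<and> e' i \<ge> r/4}"
    define B3 where "B3 = {i. i < n \<and> dist (orb s i) (orb s' i) \<le> r}"
    have cov: "{..<n} \<subseteq> G \<union> B1 \<union> B2 \<union> B3"
    proof
      fix i assume i: "i \<in> {..<n}"
      show "i \<in> G \<union> B1 \<union> B2 \<union> B3"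
      proof (cases "e i < r/4 \<and> e' i < r/4 \<and> dist (orb s i) (orb s' i) > r")
        case True
        then have "dist ((f^^i) (x s)) ((f^^i) (x s')) > r/2" using tri[of i] by simp
        then show ?thesis using i by (simp add: G_def)
      next
        case False then show ?thesis using i by (auto simp: B1_def B2_def B3_def)
      qed
    qed
    have c: "real n \<le> real (card G) + real (card B1) + real (card B2) + real (card B3)"
      by (rule cover_card[OF cov]) (auto simp: G_def B1_def B2_def B3_def)
    have "B3 \<subseteq> {..< P j + M j}"
      using orb_differ[of j _ s s'] bj by (force simp: B3_def n_def not_le[symmetric])
    then have "card B3 \<le> P j + M j"
      by (metis card_lessThan card_mono finite_lessThan)
    then have "card B3 * Suc j \<le> (P j + M j) * Suc j" by (rule mult_le_mono1)
    also have "\<dots> \<le> DD j" by (rule DD_ge)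
    also have "\<dots> \<le> n" by (simp add: n_def)
    finally have "card B3 * Suc j \<le> n" .
    then have "real (card B3) * real (Suc j) \<le> real n" by (metis of_nat_le_iff of_nat_mult)
    then have b3: "real (card B3) / real n \<le> inverse (real (Suc j))"
      using \<open>n > 0\<close> by (simp add: field_simps)
    have "inverse (real (Suc j)) \<le> inverse (real (Suc j0))"
      using jge by simp
    with b3 j0 have b3': "real (card B3) / real n < \<epsilon>/3" by linarith
    have b1: "real (card B1) / real n < \<epsilon>/3" using N1 \<open>n \<ge> N1\<close> by (simp add: B1_def)
    have b2: "real (card B2) / real n < \<epsilon>/3" using N2 \<open>n \<ge> N2\<close> by (simp add: B2_def)
    have "1 \<le> real (card G) / real n + real (card B1) / real n + real (card B2) / real n + real (card B3) / real n"
      using c \<open>n > 0\<close> by (simp add: field_simps)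
    then have "real (card G) / real n \<ge> 1 - \<epsilon>" using b1 b2 b3' by linarith
    then show ?thesis using \<open>n \<ge> N\<close> unfolding G_def by blast
  qed
  have B: "limsup (\<lambda>n. ereal (real (card {i. i < n \<and> dist ((f^^i) (x s)) ((f^^i) (x s')) > r/2}) / real n)) = 1"
    by (rule limsup_eq_one[OF frac_le1]) (use Bfr in blast)
  have neq: "x s \<noteq> x s'"
  proof
    assume eq: "x s = x s'"
    obtain n where "1 - 1/2 \<le> real (card {i. i < n \<and> dist ((f^^i) (x s)) ((f^^i) (x s')) > r/2}) / real n"
      using Bfr[of "1/2" 0] by auto
    with eq r_pos show False by simp
  qed
  have "DC1_pair f (x s) (x s')"
    unfolding DC1_pair_def using A B r_pos by (intro conjI allI impI exI[of _ "r/2"]) auto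
  with neq show ?thesis by simp
qed

end


theorem lemma4p1:
  fixes f :: "'a::metric_space \<Rightarrow> 'a"
  assumes "compact (UNIV :: 'a set)"
    and "continuous_on UNIV f"
    and "\<exists>z w. z \<in> chain_recurrent_set f \<and> w \<in> chain_recurrent_set f \<and>
               CR_rel f z w \<and> property_star f z w"
    and "\<forall>xs. (\<forall>i. xs i \<in> chain_recurrent_set f) \<and>
               (\<lambda>i. dist (f (xs i)) (xs (Suc i))) \<longlonglongrightarrow> 0 \<longrightarrow>
             (\<exists>x. (\<lambda>n. (\<Sum>i<n. dist ((f^^i) x) (xs i)) / real n) \<longlonglongrightarrow> 0)"
  shows "exhibits_DC1 f"
proof -
  define CR where "CR = chain_recurrent_set f"
  obtain z w where cr: "CR_rel f z w" and ps: "property_star f z w" using assms(3) by blast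
  obtain r where r: "r > 0" and rP: "\<forall>\<delta>>0. \<exists>k xs ys.
        delta_chain f \<delta> xs k \<and> delta_chain f \<delta> ys k \<and>
        (\<forall>i\<le>k. xs i \<in> CR \<and> ys i \<in> CR) \<and>
        xs 0 = z \<and> xs k = z \<and> ys 0 = w \<and> ys k = w \<and>
        (\<forall>i\<le>k. dist (xs i) (ys i) > r)"
    using ps unfolding property_star_def CR_def by blast
  define \<delta> where "\<delta> j = inverse (real (Suc j))" for j
  have dpos: "\<delta> j > 0" for j by (simp add: \<delta>_def)
  have "\<forall>j. \<exists>k xs ys.
        delta_chain f (\<delta> j) xs k \<and> delta_chain f (\<delta> j) ys k \<and>
        (\<forall>i\<le>k. xs i \<in> CR \<and> ys i \<in> CR) \<and>
        xs 0 = z \<and> xs k = z \<and> ys 0 = w \<and> ys k = w \<and>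
        (\<forall>i\<le>k. dist (xs i) (ys i) > r)"
    using rP dpos by blast
  then obtain kk X Y where kXY: "\<forall>j. 
        delta_chain f (\<delta> j) (X j) (kk j) \<and> delta_chain f (\<delta> j) (Y j) (kk j) \<and>
        (\<forall>i\<le>kk j. X j i \<in> CR \<and> Y j i \<in> CR) \<and>
        X j 0 = z \<and> X j (kk j) = z \<and> Y j 0 = w \<and> Y j (kk j) = w \<and>
        (\<forall>i\<le>kk j. dist (X j i) (Y j i) > r)"
    by metis
  have crP: "\<forall>\<delta>>0. \<exists>m>0. \<exists>N>0. \<forall>n\<ge>N. \<exists>xs ys.
        delta_chain f \<delta> xs (m*n) \<and> delta_chain f \<delta> ys (m*n) \<and>
        (\<forall>i\<le>m*n. xs i \<in> CR \<and> ys i \<in> CR) \<and>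
        xs 0 = z \<and> xs (m*n) = w \<and> ys 0 = w \<and> ys (m*n) = z"
    using cr unfolding CR_rel_def CR_def by blast
  have "\<forall>j. \<exists>m>0. \<exists>N>0. \<forall>n\<ge>N. \<exists>xs ys.
        delta_chain f (\<delta> j) xs (m*n) \<and> delta_chain f (\<delta> j) ys (m*n) \<and>
        (\<forall>i\<le>m*n. xs i \<in> CR \<and> ys i \<in> CR) \<and>
        xs 0 = z \<and> xs (m*n) = w \<and> ys 0 = w \<and> ys (m*n) = z"
    using crP dpos by blast
  then obtain mm NN where mN: "\<forall>j. mm j > 0 \<and> NN j > 0 \<and> (\<forall>n\<ge>NN j. \<exists>xs ys.
        delta_chain f (\<delta> j) xs (mm j*n) \<and> delta_chain f (\<delta> j) ys (mm j*n) \<and>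
        (\<forall>i\<le>mm j*n. xs i \<in> CR \<and> ys i \<in> CR) \<and>
        xs 0 = z \<and> xs (mm j*n) = w \<and> ys 0 = w \<and> ys (mm j*n) = z)"
    by metis
  have kpos: "kk j \<ge> 1" for j using kXY unfolding delta_chain_def by blast
  define M where "M j = mm j * (kk j * NN j)" for j
  have "\<forall>j. \<exists>xs ys.
        delta_chain f (\<delta> j) xs (M j) \<and> delta_chain f (\<delta> j) ys (M j) \<and>
        (\<forall>i\<le>M j. xs i \<in> CR \<and> ys i \<in> CR) \<and>
        xs 0 = z \<and> xs (M j) = w \<and> ys 0 = w \<and> ys (M j) = z"
  proof
    fix j
    have "kk j * NN j \<ge> NN j" using kpos[of j] by simp
    then show "\<exists>xs ys.
        delta_chain f (\<delta> j) xs (M j) \<and> delta_chain f (\<delta> j) ys (M j) \<and>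
        (\<forall>i\<le>M j. xs i \<in> CR \<and> ys i \<in> CR) \<and>
        xs 0 = z \<and> xs (M j) = w \<and> ys 0 = w \<and> ys (M j) = z"
      using mN unfolding M_def by blast
  qed
  then obtain Zw Wz where ZW: "\<forall>j. 
        delta_chain f (\<delta> j) (Zw j) (M j) \<and> delta_chain f (\<delta> j) (Wz j) (M j) \<and>
        (\<forall>i\<le>M j. Zw j i \<in> CR \<and> Wz j i \<in> CR) \<and>
        Zw j 0 = z \<and> Zw j (M j) = w \<and> Wz j 0 = w \<and> Wz j (M j) = z"
    by metis
  have Mpos: "M j \<ge> 1" for j
  proof -
    have "mm j > 0" "NN j > 0" using mN by auto
    then show ?thesis using kpos[of j] by (simp add: M_def Suc_le_eq)
  qed
  interpret c: constr f z w r kk X Y M Zw Wz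
  proof
    show "r > 0" by (rule r)
    show "\<And>j. 1 \<le> kk j" by (rule kpos)
    show "\<And>j. 1 \<le> M j" by (rule Mpos)
    show "\<And>j. kk j dvd M j" by (simp add: M_def)
  qed (use kXY ZW in \<open>auto simp: delta_chain_def \<delta>_def CR_def\<close>)
  have ex: "\<exists>x. (\<lambda>n. (\<Sum>i<n. dist ((f^^i) x) (c.orb s i)) / real n) \<longlonglongrightarrow> 0" for s
    using assms(4) c.orb_CR c.orb_step_lim by blast
  define x where "x s = (SOME x. (\<lambda>n. (\<Sum>i<n. dist ((f^^i) x) (c.orb s i)) / real n) \<longlonglongrightarrow> 0)" for s
  have sh: "(\<lambda>n. (\<Sum>i<n. dist ((f^^i) (x s)) (c.orb s i)) / real n) \<longlonglongrightarrow> 0" for s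
    unfolding x_def by (rule someI_ex[OF ex])
  have pairs: "s \<noteq> s' \<Longrightarrow> DC1_pair f (x s) (x s') \<and> x s \<noteq> x s'" for s s'
    by (rule c.DC1_pairs[OF sh])
  have inj: "inj x" unfolding inj_def using pairs by blast
  have "uncountable (range x)"
  proof
    assume "countable (range x)"
    then have "countable (UNIV :: (nat \<Rightarrow> bool) set)"
      using countable_image_inj_on inj by blast
    with uncountable_bitseq show False by blast
  qed
  moreover have "\<forall>a\<in>range x. \<forall>b\<in>range x. a \<noteq> b \<longrightarrow> DC1_pair f a b"
    using pairs by (metis rangeE)
  ultimately show ?thesis unfolding exhibits_DC1_def by blast
qed

end
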